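(* Let $X$ be $\mathbf{S}^2\times\mathbb{R}$ or $\mathbf{H}^2\times\mathbb{R}$ in the projective model described in the context, and let $P=(1,x,y,z)$ with $x,y,z\in\mathbb{R}$ and $x^2+y^2+z^2>0$ in $\mathbf{S}^2\times\mathbb{R}$, respectively $x^2-y^2-z^2>0$, $x>0$ in $\mathbf{H}^2\times\mathbb{R}$. Then the translation curve drawn from $E_0=(1,1,0,0)$ to $P$ has at $E_0$ the tangent vector \[ \tau\cdot\mathbf{t}_P=\left(\tfrac12\ln\big(x^2\pm(y^2+z^2)\big),\ \frac{y\,\mathrm{arcC}\Big(\frac{x}{\sqrt{x^2\pm(y^2+z^2)}}\Big)}{\sqrt{y^2+z^2}},\ \frac{z\,\mathrm{arcC}\Big(\frac{x}{\sqrt{x^2\pm(y^2+z^2)}}\Big)}{\sqrt{y^2+z^2}}\right), \] where $\pm$ is $+$ and $\mathrm{arcC}=\arccos$ for $\mathbf{S}^2\times\mathbb{R}$, $\pm$ is $-$ and $\mathrm{arcC}=\mathrm{arccosh}$ for $\mathbf{H}^2\times\mathbb{R}$, $\mathbf{t}_P$ is the unit initial tangent vector and $\tau$ is the translation distance of $P$ and $E_0$.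
   Context: Points are written in homogeneous coordinates $(1,x,y,z)$; $\mathbf{S}^2\times\mathbb{R}$ is the set of such points with $x^2+y^2+z^2>0$ and $\mathbf{H}^2\times\mathbb{R}$ the set with $x^2-y^2-z^2>0$, $x>0$. Let $S,C$ denote $\sin,\cos$ in $\mathbf{S}^2\times\mathbb{R}$ and $\sinh,\cosh$ in $\mathbf{H}^2\times\mathbb{R}$. The translation curves (which coincide with geodesics) starting at $E_0=(1,1,0,0)$ are, with arc-length $\tau\ge0$ and parameters $-\pi<u\le\pi$, $-\pi/2\le v\le\pi/2$: $x(\tau)=e^{\tau\sin v}C(\tau\cos v)$, $y(\tau)=e^{\tau\sin v}S(\tau\cos v)\cos u$, $z(\tau)=e^{\tau\sin v}S(\tau\cos v)\sin u$. Their unit tangent vector at $E_0$ is $\mathbf{t}=(\sin v,\cos v\cos u,\cos v\sin u)$. *)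

theory Defs
  imports Complex_Main
begin

text \<open>The two geometries S^2 x R and H^2 x R.  A point (1,x,y,z) in homogeneous
coordinates is represented by the affine triple (x,y,z).\<close>

datatype geom = S2R | H2R

definition in_X :: "geom \<Rightarrow> real \<times> real \<times> real \<Rightarrow> bool" where
  "in_X X p = (case p of (x,y,z) \<Rightarrow>
     (case X of S2R \<Rightarrow> x^2 + y^2 + z^2 > 0
              | H2R \<Rightarrow> x^2 - y^2 - z^2 > 0 \<and> x > 0))"

definition S_fun :: "geom \<Rightarrow> real \<Rightarrow> real" where
  "S_fun X = (case X of S2R \<Rightarrow> sin | H2R \<Rightarrow> sinh)"

definition C_fun :: "geom \<Rightarrow> real \<Rightarrow> real" where
  "C_fun X = (case X of S2R \<Rightarrow> cos | H2R \<Rightarrow> cosh)"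

definition arcC :: "geom \<Rightarrow> real \<Rightarrow> real" where
  "arcC X = (case X of S2R \<Rightarrow> arccos | H2R \<Rightarrow> arcosh)"

definition pm :: "geom \<Rightarrow> real" where
  "pm X = (case X of S2R \<Rightarrow> 1 | H2R \<Rightarrow> -1)"

text \<open>Point at arc-length tau on the translation curve from E0=(1,1,0,0) with parameters u, v.\<close>
definition tcurve :: "geom \<Rightarrow> real \<Rightarrow> real \<Rightarrow> real \<Rightarrow> real \<times> real \<times> real" where
  "tcurve X tau u v =
     (exp (tau * sin v) * C_fun X (tau * cos v),
      exp (tau * sin v) * S_fun X (tau * cos v) * cos u,
      exp (tau * sin v) * S_fun X (tau * cos v) * sin u)"

definition admissible_params :: "real \<Rightarrow> real \<Rightarrow> real \<Rightarrow> bool" where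
  "admissible_params tau u v \<longleftrightarrow>
     tau \<ge> 0 \<and> -pi < u \<and> u \<le> pi \<and> -pi/2 \<le> v \<and> v \<le> pi/2"

definition unit_tangent :: "real \<Rightarrow> real \<Rightarrow> real \<times> real \<times> real" where
  "unit_tangent u v = (sin v, cos v * cos u, cos v * sin u)"

text \<open>(tau,u,v) describe THE translation curve from E0 to P: it reaches P at arc-length tau,
and tau is minimal among all translation curves from E0 reaching P, i.e. tau is the
translation distance of E0 and P.\<close>
definition translation_curve_to :: "geom \<Rightarrow> real \<times> real \<times> real \<Rightarrow> real \<Rightarrow> real \<Rightarrow> real \<Rightarrow> bool" where
  "translation_curve_to X P tau u v \<longleftrightarrow>
     admissible_params tau u v \<and> tcurve X tau u v = P \<and>
     (\<forall>tau' u' v'. admissible_params tau' u' v' \<and> tcurve X tau' u' v' = P \<longrightarrow> tau \<le> tau')"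

end

theory Submission
  imports Defs
begin

lemma key:
  fixes a b s c tau u v x y z Q A :: real
  assumes "tau * sin v = a" "tau * cos v = b"
    and "Q = (exp a)^2" "sqrt (y^2+z^2) = exp a * s" "s > 0"
    and "y = exp a * s * cos u" "z = exp a * s * sin u"
    and "A = b"
  shows "(tau * sin v, tau * (cos v * cos u), tau * (cos v * sin u)) =
         (ln Q / 2, y * A / sqrt (y^2+z^2), z * A / sqrt (y^2+z^2))"
proof -
  have "ln Q = 2 * a" using assms(3) by (simp add: ln_realpow[symmetric] exp_double[symmetric] power2_eq_square exp_add[symmetric])
  moreover have "y * A / sqrt (y^2+z^2) = tau * (cos v * cos u)"
    using assms by (simp add: field_simps)
  moreover have "z * A / sqrt (y^2+z^2) = tau * (cos v * sin u)"
    using assms by (simp add: field_simps)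
  ultimately show ?thesis using assms(1) by simp
qed

theorem lemma4p9:
  fixes X :: geom and x y z tau u v :: real
  assumes "in_X X (x, y, z)"
    and "y^2 + z^2 > 0"
    and "translation_curve_to X (x, y, z) tau u v"
  shows "(tau * fst (unit_tangent u v),
          tau * fst (snd (unit_tangent u v)),
          tau * snd (snd (unit_tangent u v))) =
         (ln (x^2 + pm X * (y^2 + z^2)) / 2,
          y * arcC X (x / sqrt (x^2 + pm X * (y^2 + z^2))) / sqrt (y^2 + z^2),
          z * arcC X (x / sqrt (x^2 + pm X * (y^2 + z^2))) / sqrt (y^2 + z^2))"
proof -
  define a where "a = tau * sin v"
  define b where "b = tau * cos v"
  have adm: "admissible_params tau u v" and tc: "tcurve X tau u v = (x,y,z)"
    and mn: "\<And>tau' u' v'. admissible_params tau' u' v' \<Longrightarrow> tcurve X tau' u' v' = (x,y,z) \<Longrightarrow> tau \<le> tau'"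
    using assms(3) unfolding translation_curve_to_def by blast+
  have t0: "tau \<ge> 0" and v1: "-pi/2 \<le> v" and v2: "v \<le> pi/2" and u1: "-pi < u" and u2: "u \<le> pi"
    using adm unfolding admissible_params_def by auto
  have "cos v \<ge> 0" using v1 v2 by (intro cos_ge_zero) auto
  hence b0: "b \<ge> 0" using t0 b_def by simp
  have tau2: "tau^2 = a^2 + b^2" unfolding a_def b_def
    by (simp add: power_mult_distrib distrib_left[symmetric])
  have E: "exp a > 0" by simp
  show ?thesis
  proof (cases X)
    case S2R
    have xyz: "x = exp a * cos b" "y = exp a * sin b * cos u" "z = exp a * sin b * sin u"
      using tc S2R by (auto simp: tcurve_def C_fun_def S_fun_def a_def b_def)
    have yz: "y^2 + z^2 = (exp a)^2 * (sin b)^2"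
    proof -
      have "y^2+z^2 = (exp a * sin b)^2 * ((cos u)^2 + (sin u)^2)" unfolding xyz by algebra
      thus ?thesis by (simp only: sin_cos_squared_add2 mult_1_right power_mult_distrib)
    qed
    have Q: "x^2 + pm X * (y^2+z^2) = (exp a)^2"
    proof -
      have "x^2 + pm X * (y^2+z^2) = (exp a)^2 * ((sin b)^2 + (cos b)^2)" proof -
        have "pm X = 1" using S2R by (simp add: pm_def)
        thus ?thesis unfolding yz xyz(1) by algebra
      qed
      thus ?thesis by simp
    qed
    have sb: "sin b \<noteq> 0" using assms(2) yz by auto
    have c: "x / sqrt (x^2 + pm X * (y^2+z^2)) = cos b" using Q E xyz by simp
    define b0 where "b0 = arccos (cos b)"
    have b0r: "0 \<le> b0" "b0 \<le> pi" unfolding b0_def by (auto intro: arccos_lbound arccos_ubound)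
    have cb0: "cos b0 = cos b" unfolding b0_def by simp
    have "1 - (cos b)^2 = (sin b)^2" by (simp add: sin_squared_eq)
    hence sb0: "sin b0 = \<bar>sin b\<bar>" unfolding b0_def
      by (simp add: sin_arccos)
    have "b \<le> b0"
    proof -
      define t' where "t' = sqrt (a^2 + b0^2)"
      have t'p: "t' > 0" unfolding t'_def using sb0 sb b0r by (auto intro!: add_nonneg_pos)
      define v' where "v' = arcsin (a / t')"
      have "\<bar>a\<bar> \<le> t'" unfolding t'_def by (rule real_sqrt_ge_abs1)
      hence at: "\<bar>a / t'\<bar> \<le> 1" using t'p by (simp add: abs_divide)
      hence at2: "-1 \<le> a/t'" "a/t' \<le> 1" by (simp_all only: abs_le_iff) linarith+
      have sv': "t' * sin v' = a" unfolding v'_def using at2 t'p by simp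
      have t'sq: "t'^2 = a^2 + b0^2" unfolding t'_def by simp
      have "1 - (a/t')^2 = (t'^2 - a^2)/t'^2" using t'p by (simp add: power_divide field_simps)
      also have "... = (b0/t')^2" using t'sq by (simp add: power_divide)
      finally have "1 - (a/t')^2 = (b0/t')^2" .
      hence "sqrt (1 - (a/t')^2) = b0/t'" using b0r t'p by simp
      hence cv': "t' * cos v' = b0" unfolding v'_def using at2 t'p by (simp add: cos_arcsin)
      have v'r: "-pi/2 \<le> v'" "v' \<le> pi/2" unfolding v'_def using at2 arcsin_bounded by auto
      define u' where "u' = (if sin b > 0 then u else if u \<le> 0 then u + pi else u - pi)"
      have u'r: "-pi < u'" "u' \<le> pi" unfolding u'_def using u1 u2 by auto
      have cu': "sin b0 * cos u' = sin b * cos u" and su': "sin b0 * sin u' = sin b * sin u"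
        unfolding u'_def sb0 using sb by (auto simp: cos_add sin_add cos_diff sin_diff)
      have "admissible_params t' u' v'" unfolding admissible_params_def using t'p u'r v'r by auto
      moreover have "tcurve X t' u' v' = (x,y,z)"
        using S2R unfolding tcurve_def C_fun_def S_fun_def xyz sv' cv'
        by (simp add: cb0 mult.assoc cu' su')
      ultimately have "tau \<le> t'" by (rule mn)
      hence "tau^2 \<le> t'^2" using t0 by (simp add: power_mono)
      hence "b^2 \<le> b0^2" using tau2 unfolding t'_def by simp
      thus ?thesis using b0 b0r by (simp add: power2_le_iff_abs_le)
    qed
    hence bp: "b \<le> pi" using b0r by simp
    have "arccos (cos b) = b" using b0 bp by (simp add: arccos_cos)
    have sbp: "sin b > 0" using sb b0 bp sin_ge_zero[of b] by auto
    have sq: "sqrt (y^2+z^2) = exp a * sin b" using yz sbp by (simp add: real_sqrt_mult)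
    show ?thesis unfolding unit_tangent_def fst_conv snd_conv
      apply (rule key[OF a_def[symmetric] b_def[symmetric] Q sq sbp xyz(2,3)])
      using c \<open>arccos (cos b) = b\<close> S2R by (simp add: arcC_def)
  next
    case H2R
    have xyz: "x = exp a * cosh b" "y = exp a * sinh b * cos u" "z = exp a * sinh b * sin u"
      using tc H2R by (auto simp: tcurve_def C_fun_def S_fun_def a_def b_def)
    have yz: "y^2 + z^2 = (exp a)^2 * (sinh b)^2"
    proof -
      have "y^2+z^2 = (exp a * sinh b)^2 * ((cos u)^2 + (sin u)^2)" unfolding xyz by algebra
      thus ?thesis by (simp only: sin_cos_squared_add2 mult_1_right power_mult_distrib)
    qed
    have Q: "x^2 + pm X * (y^2+z^2) = (exp a)^2"
    proof -
      have "x^2 + pm X * (y^2+z^2) = (exp a)^2 * ((cosh b)^2 - (sinh b)^2)" proof -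
        have "pm X = -1" using H2R by (simp add: pm_def)
        thus ?thesis unfolding yz xyz(1) by algebra
      qed
      thus ?thesis by (simp add: cosh_square_eq)
    qed
    have sb: "sinh b \<noteq> 0" using assms(2) yz by auto
    have sbp: "sinh b > 0" using sb b0 by (simp add: less_le)
    have c: "x / sqrt (x^2 + pm X * (y^2+z^2)) = cosh b" using Q E xyz by simp
    have ac: "arcosh (cosh b) = b" using b0 by (simp add: arcosh_cosh_real)
    have sq: "sqrt (y^2+z^2) = exp a * sinh b" using yz sbp by (simp add: real_sqrt_mult)
    show ?thesis unfolding unit_tangent_def fst_conv snd_conv
      apply (rule key[OF a_def[symmetric] b_def[symmetric] Q sq sbp xyz(2,3)])
      using c ac H2R by (simp add: arcC_def)
  qed
qed

end
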